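(* Let $m,n\geq 3$ and let $v$ be a vertex of the torus grid $T_{m,n}=C_m\square C_n$. Then $\mathrm{ef}(v)<9$.
   Context: For a vertex $v$ of a graph, $N_i(v)$ denotes the set of vertices at distance exactly $i$ from $v$, and $\mathrm{ef}(v)=\sum_{i\geq 0}(1/2)^i|N_i(v)|$. $C_m\square C_n$ is the Cartesian product of cycles on $m$ and $n$ vertices. *)

theory Defs
  imports Complex_Main
begin

definition cycle_adj :: "nat \<Rightarrow> nat \<Rightarrow> nat \<Rightarrow> bool" where
  "cycle_adj m a c \<longleftrightarrow> a < m \<and> c < m \<and> (c = (a + 1) mod m \<or> a = (c + 1) mod m)"

definition torus_verts :: "nat \<Rightarrow> nat \<Rightarrow> (nat \<times> nat) set" where
  "torus_verts m n = {0..<m} \<times> {0..<n}"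

definition torus_edges :: "nat \<Rightarrow> nat \<Rightarrow> ((nat \<times> nat) \<times> (nat \<times> nat)) set" where
  "torus_edges m n = {((a,b),(c,d)). (a,b) \<in> torus_verts m n \<and> (c,d) \<in> torus_verts m n \<and>
      ((a = c \<and> cycle_adj n b d) \<or> (b = d \<and> cycle_adj m a c))}"

definition dist_sphere :: "'a set \<Rightarrow> ('a \<times> 'a) set \<Rightarrow> 'a \<Rightarrow> nat \<Rightarrow> 'a set" where
  "dist_sphere V E v i = {u \<in> V. (v, u) \<in> E ^^ i \<and> (\<forall>j<i. (v, u) \<notin> E ^^ j)}"

definition ef :: "'a set \<Rightarrow> ('a \<times> 'a) set \<Rightarrow> 'a \<Rightarrow> real" where
  "ef V E v = (\<Sum>i. (1/2) ^ i * real (card (dist_sphere V E v i)))"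

end

theory Submission
  imports Defs
begin

definition pm :: "nat \<Rightarrow> int \<Rightarrow> nat" where "pm m z = nat (z mod int m)"

lemma pm_lt: "m > 0 \<Longrightarrow> pm m z < m"
  unfolding pm_def by (simp add: nat_less_iff)

lemma pm_id: "c < m \<Longrightarrow> pm m (int c) = c"
  unfolding pm_def by simp

lemma pm_int: "m > 0 \<Longrightarrow> int (pm m z) = z mod int m"
  unfolding pm_def by simp

lemma pm_suc: "m > 0 \<Longrightarrow> pm m (z+1) = (pm m z + 1) mod m"
proof -
  assume m: "m > 0"
  have "int ((pm m z + 1) mod m) = (int (pm m z) + 1) mod int m"
    by (simp add: zmod_int add.commute)
  also have "\<dots> = (z mod int m + 1) mod int m" using pm_int[OF m] by simp
  also have "\<dots> = (z + 1) mod int m" by (simp add: mod_add_left_eq)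
  also have "\<dots> = int (pm m (z+1))" using pm_int[OF m] by simp
  finally show ?thesis by simp
qed

lemma pm_pred: "m > 0 \<Longrightarrow> c < m \<Longrightarrow> pm m z = (c+1) mod m \<Longrightarrow> c = pm m (z-1)"
proof -
  assume m: "m > 0" and c: "c < m" and h: "pm m z = (c+1) mod m"
  have "z mod int m = (int c + 1) mod int m"
    using arg_cong[OF h, of int] pm_int[OF m] by (simp add: zmod_int add.commute)
  then have "(z - 1) mod int m = (int c + 1 - 1) mod int m"
    by (metis mod_diff_cong)
  then have "(z - 1) mod int m = int c" using c by simp
  then show ?thesis using pm_int[OF m, of "z-1"] by simp
qed

lemma cyc1: "m > 0 \<Longrightarrow> cycle_adj m (pm m z) (pm m (z+1))"
  unfolding cycle_adj_def using pm_lt pm_suc by auto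

lemma cyc2: "m > 0 \<Longrightarrow> cycle_adj m (pm m (z+1)) (pm m z)"
  unfolding cycle_adj_def using pm_lt pm_suc by auto

lemma edgeA: "m > 0 \<Longrightarrow> n > 0 \<Longrightarrow> ((pm m z, pm n w), (pm m (z+1), pm n w)) \<in> torus_edges m n"
  unfolding torus_edges_def torus_verts_def using cyc1 pm_lt by auto
lemma edgeB: "m > 0 \<Longrightarrow> n > 0 \<Longrightarrow> ((pm m (z+1), pm n w), (pm m z, pm n w)) \<in> torus_edges m n"
  unfolding torus_edges_def torus_verts_def using cyc2 pm_lt by auto
lemma edgeC: "m > 0 \<Longrightarrow> n > 0 \<Longrightarrow> ((pm m z, pm n w), (pm m z, pm n (w+1))) \<in> torus_edges m n"
  unfolding torus_edges_def torus_verts_def using cyc1 pm_lt by auto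
lemma edgeD: "m > 0 \<Longrightarrow> n > 0 \<Longrightarrow> ((pm m z, pm n (w+1)), (pm m z, pm n w)) \<in> torus_edges m n"
  unfolding torus_edges_def torus_verts_def using cyc2 pm_lt by auto

lemma reachB:
  assumes m: "m > 0" and n: "n > 0"
  shows "\<forall>x y. nat \<bar>x\<bar> + nat \<bar>y\<bar> = k \<longrightarrow>
     ((pm m a, pm n b), (pm m (a+x), pm n (b+y))) \<in> torus_edges m n ^^ k"
proof (induction k)
  case 0
  then show ?case by auto
next
  case (Suc k)
  show ?case
  proof (intro allI impI)
    fix x y :: int
    assume h: "nat \<bar>x\<bar> + nat \<bar>y\<bar> = Suc k"
    show "((pm m a, pm n b), (pm m (a+x), pm n (b+y))) \<in> torus_edges m n ^^ Suc k"
    proof (cases "x > 0")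
      case True
      have "nat \<bar>x-1\<bar> + nat \<bar>y\<bar> = k" using h True by simp
      then have "((pm m a, pm n b), (pm m (a+(x-1)), pm n (b+y))) \<in> torus_edges m n ^^ k"
        using Suc.IH by blast
      moreover have "((pm m (a+(x-1)), pm n (b+y)), (pm m (a+x), pm n (b+y))) \<in> torus_edges m n"
        using edgeA[OF m n, of "a+(x-1)" "b+y"] by simp
      ultimately show ?thesis by (rule relpow_Suc_I)
    next
      case False
      note F = False
      show ?thesis
      proof (cases "x < 0")
        case True
        have "nat \<bar>x+1\<bar> + nat \<bar>y\<bar> = k" using h True by simp
        then have "((pm m a, pm n b), (pm m (a+(x+1)), pm n (b+y))) \<in> torus_edges m n ^^ k"
          using Suc.IH by blast
        moreover have "((pm m (a+(x+1)), pm n (b+y)), (pm m (a+x), pm n (b+y))) \<in> torus_edges m n"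
          using edgeB[OF m n, of "a+x" "b+y"] by (simp add: add.assoc)
        ultimately show ?thesis by (rule relpow_Suc_I)
      next
        case False
        then have x0: "x = 0" using F by simp
        show ?thesis
        proof (cases "y > 0")
          case True
          have "nat \<bar>x\<bar> + nat \<bar>y-1\<bar> = k" using h True x0 by simp
          then have "((pm m a, pm n b), (pm m (a+x), pm n (b+(y-1)))) \<in> torus_edges m n ^^ k"
            using Suc.IH by blast
          moreover have "((pm m (a+x), pm n (b+(y-1))), (pm m (a+x), pm n (b+y))) \<in> torus_edges m n"
            using edgeC[OF m n, of "a+x" "b+(y-1)"] by simp
          ultimately show ?thesis by (rule relpow_Suc_I)
        next
          case False
          then have y: "y < 0" using h x0 by auto
          have "nat \<bar>x\<bar> + nat \<bar>y+1\<bar> = k" using h y x0 by simp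
          then have "((pm m a, pm n b), (pm m (a+x), pm n (b+(y+1)))) \<in> torus_edges m n ^^ k"
            using Suc.IH by blast
          moreover have "((pm m (a+x), pm n (b+(y+1))), (pm m (a+x), pm n (b+y))) \<in> torus_edges m n"
            using edgeD[OF m n, of "a+x" "b+y"] by (simp add: add.assoc)
          ultimately show ?thesis by (rule relpow_Suc_I)
        qed
      qed
    qed
  qed
qed

lemma reachA:
  assumes m: "m > 0" and n: "n > 0"
  shows "((pm m a, pm n b), u) \<in> torus_edges m n ^^ k \<Longrightarrow>
     \<exists>x y. nat \<bar>x\<bar> + nat \<bar>y\<bar> \<le> k \<and> u = (pm m (a+x), pm n (b+y))"
proof (induction k arbitrary: u)
  case 0
  then show ?case by (intro exI[of _ 0]) auto
next
  case (Suc k)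
  then obtain w where w1: "((pm m a, pm n b), w) \<in> torus_edges m n ^^ k"
     and w2: "(w, u) \<in> torus_edges m n" by auto
  from Suc.IH[OF w1] obtain x y where xy: "nat \<bar>x\<bar> + nat \<bar>y\<bar> \<le> k"
     and w: "w = (pm m (a+x), pm n (b+y))" by blast
  obtain c d where u: "u = (c,d)" by (cases u)
  have cd: "c < m" "d < n" using w2 u unfolding torus_edges_def torus_verts_def by auto
  have "(c = pm m (a+x) \<and> (d = pm n (b+y+1) \<or> d = pm n (b+y-1))) \<or>
        (d = pm n (b+y) \<and> (c = pm m (a+x+1) \<or> c = pm m (a+x-1)))"
  proof -
    have E: "(pm m (a+x) = c \<and> cycle_adj n (pm n (b+y)) d) \<or> (pm n (b+y) = d \<and> cycle_adj m (pm m (a+x)) c)"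
      using w2 u w unfolding torus_edges_def by auto
    have C1: "cycle_adj n (pm n (b+y)) d \<Longrightarrow> d = pm n (b+y+1) \<or> d = pm n (b+y-1)"
      unfolding cycle_adj_def using pm_suc[OF n, of "b+y"] pm_pred[OF n cd(2), of "b+y"] by auto
    have C2: "cycle_adj m (pm m (a+x)) c \<Longrightarrow> c = pm m (a+x+1) \<or> c = pm m (a+x-1)"
      unfolding cycle_adj_def using pm_suc[OF m, of "a+x"] pm_pred[OF m cd(1), of "a+x"] by auto
    show ?thesis using E C1 C2 by blast
  qed
  then show ?case
  proof (elim disjE conjE)
    assume "c = pm m (a+x)" "d = pm n (b+y+1)"
    then show ?case using u xy by (intro exI[of _ x] exI[of _ "y+1"]) (auto simp: add.assoc)
  next
    assume "c = pm m (a+x)" "d = pm n (b+y-1)"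
    then show ?case using u xy by (intro exI[of _ x] exI[of _ "y-1"]) (auto simp: algebra_simps)
  next
    assume "d = pm n (b+y)" "c = pm m (a+x+1)"
    then show ?case using u xy by (intro exI[of _ "x+1"] exI[of _ y]) (auto simp: add.assoc)
  next
    assume "d = pm n (b+y)" "c = pm m (a+x-1)"
    then show ?case using u xy by (intro exI[of _ "x-1"] exI[of _ y]) (auto simp: algebra_simps)
  qed
qed


lemma geo_sum: "(\<Sum>i<K. real i * (1/2)^i) = 2 - 2 * (real K + 1) * (1/2)^K"
proof (induction K)
  case 0 then show ?case by simp
next
  case (Suc K)
  have "(\<Sum>i<Suc K. real i * (1/2)^i) = 2 - 2 * (real K + 1) * (1/2)^K + real K * (1/2)^K"
    using Suc.IH by simp
  also have "\<dots> = 2 - 2 * (real (Suc K) + 1) * (1/2)^(Suc K)"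
    by (simp add: algebra_simps)
  finally show ?case .
qed

lemma quad_cover:
  assumes "nat \<bar>x\<bar> + nat \<bar>y\<bar> = i" and "i \<ge> 1"
  shows "\<exists>t k. t < i \<and> k < (4::nat) \<and>
    (x, y) = (if k = 0 then (int t, int i - int t) else if k = 1 then (int i - int t, - int t)
      else if k = 2 then (- int t, int t - int i) else (int t - int i, int t))"
proof -
  consider "x \<ge> 0 \<and> y > 0" | "x > 0 \<and> y \<le> 0" | "x \<le> 0 \<and> y < 0" | "x < 0 \<and> y \<ge> 0"
    using assms by linarith
  then show ?thesis
  proof cases
    case 1 then show ?thesis using assms by (intro exI[of _ "nat x"] exI[of _ 0]) auto
  next
    case 2 then show ?thesis using assms by (intro exI[of _ "nat (-y)"] exI[of _ 1]) auto
  next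
    case 3 then show ?thesis using assms by (intro exI[of _ "nat (-x)"] exI[of _ 2]) auto
  next
    case 4 then show ?thesis using assms by (intro exI[of _ "nat y"] exI[of _ 3]) auto
  qed
qed

theorem claim5p5:
  fixes m n :: nat and v :: "nat \<times> nat"
  assumes "m \<ge> 3" and "n \<ge> 3" and "v \<in> torus_verts m n"
  shows "ef (torus_verts m n) (torus_edges m n) v < 9"
proof -
  have m: "m > 0" and n: "n > 0" using assms by auto
  obtain a0 b0 where v: "v = (a0, b0)" and a0: "a0 < m" and b0: "b0 < n"
    using assms(3) unfolding torus_verts_def by auto
  define A where "A = int a0"
  define B where "B = int b0"
  have vA: "v = (pm m A, pm n B)" using v a0 b0 pm_id unfolding A_def B_def by auto
  define N where "N i = dist_sphere (torus_verts m n) (torus_edges m n) v i" for i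
  define S where "S i = {u. \<exists>x y. nat \<bar>x\<bar> + nat \<bar>y\<bar> = i \<and> u = (pm m (A+x), pm n (B+y))}" for i
  have sub: "N i \<subseteq> S i" for i
  proof
    fix u assume u: "u \<in> N i"
    then have r: "(v, u) \<in> torus_edges m n ^^ i" and nr: "\<forall>j<i. (v, u) \<notin> torus_edges m n ^^ j"
      unfolding N_def dist_sphere_def by auto
    obtain x y where xy: "nat \<bar>x\<bar> + nat \<bar>y\<bar> \<le> i" and ux: "u = (pm m (A+x), pm n (B+y))"
      using reachA[OF m n] r vA by metis
    have "(v, u) \<in> torus_edges m n ^^ (nat \<bar>x\<bar> + nat \<bar>y\<bar>)"
      using reachB[OF m n, of "nat \<bar>x\<bar> + nat \<bar>y\<bar>" A B] vA ux by blast
    then have "nat \<bar>x\<bar> + nat \<bar>y\<bar> = i" using nr xy by (meson le_neq_implies_less)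
    then show "u \<in> S i" unfolding S_def using ux by blast
  qed
  have empty: "N i = {}" if i: "i \<ge> m + n" for i
  proof (rule ccontr)
    assume "N i \<noteq> {}"
    then obtain u where u: "u \<in> N i" by auto
    then have nr: "\<forall>j<i. (v, u) \<notin> torus_edges m n ^^ j" and uV: "u \<in> torus_verts m n"
      unfolding N_def dist_sphere_def by auto
    obtain c d where ucd: "u = (c, d)" and c: "c < m" and d: "d < n"
      using uV unfolding torus_verts_def by auto
    define x where "x = int c - A"
    define y where "y = int d - B"
    have "u = (pm m (A+x), pm n (B+y))" using ucd pm_id c d unfolding x_def y_def by auto
    then have "(v, u) \<in> torus_edges m n ^^ (nat \<bar>x\<bar> + nat \<bar>y\<bar>)"
      using reachB[OF m n, of "nat \<bar>x\<bar> + nat \<bar>y\<bar>" A B] vA by blast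
    moreover have "nat \<bar>x\<bar> + nat \<bar>y\<bar> < i"
    proof -
      have "\<bar>x\<bar> < int m" using c a0 unfolding x_def A_def by (simp add: abs_less_iff)
      moreover have "\<bar>y\<bar> < int n" using d b0 unfolding y_def B_def by (simp add: abs_less_iff)
      ultimately show ?thesis using i by linarith
    qed
    ultimately show False using nr by blast
  qed
  have card0: "card (N 0) \<le> 1"
  proof -
    have "S 0 = {v}" unfolding S_def using vA by auto
    then have "N 0 \<subseteq> {v}" using sub[of 0] by auto
    then have "card (N 0) \<le> card {v}" by (intro card_mono) auto
    then show ?thesis by simp
  qed
  have cardi: "card (N i) \<le> 4 * i" if i: "i \<ge> 1" for i
  proof -
    define G where "G = (\<lambda>(t::nat, k::nat). (\<lambda>(x, y). (pm m (A+x), pm n (B+y)))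
      (if k = 0 then (int t, int i - int t) else if k = 1 then (int i - int t, - int t)
      else if k = 2 then (- int t, int t - int i) else (int t - int i, int t)))"
    have "S i \<subseteq> G ` ({..<i} \<times> {..<4})"
    proof
      fix u assume "u \<in> S i"
      then obtain x y where xy: "nat \<bar>x\<bar> + nat \<bar>y\<bar> = i" and ux: "u = (pm m (A+x), pm n (B+y))"
        unfolding S_def by blast
      obtain t k where tk: "t < i" "k < (4::nat)" and e: "(x, y) = (if k = 0 then (int t, int i - int t) else if k = 1 then (int i - int t, - int t)
      else if k = 2 then (- int t, int t - int i) else (int t - int i, int t))"
        using quad_cover[OF xy i] by blast
      have "u = G (t, k)" using ux by (simp only: G_def prod.case e[symmetric])
      then show "u \<in> G ` ({..<i} \<times> {..<4})" using tk by blast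
    qed
    then have "card (N i) \<le> card (G ` ({..<i} \<times> {..<4}))"
      using sub[of i] by (intro card_mono) auto
    also have "\<dots> \<le> card ({..<i} \<times> {..<4::nat})" by (rule card_image_le) auto
    also have "\<dots> = 4 * i" by (simp add: card_cartesian_product)
    finally show ?thesis .
  qed
  have cardb: "real (card (N i)) \<le> 4 * real i + (if i = 0 then 1 else 0)" for i
    using card0 cardi[of i] by (cases "i = 0") auto
  define f where "f i = (1/2::real)^i * real (card (N i))" for i
  define K where "K = m + n"
  have K: "K > 0" using m unfolding K_def by simp
  have "ef (torus_verts m n) (torus_edges m n) v = suminf f"
    unfolding ef_def f_def N_def by simp
  also have "\<dots> = (\<Sum>i<K. f i)"
    by (rule suminf_finite) (auto simp: f_def empty K_def)
  also have "\<dots> \<le> (\<Sum>i<K. 4 * (real i * (1/2)^i) + (if i = 0 then 1 else 0))"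
  proof (rule sum_mono)
    fix i assume "i \<in> {..<K}"
    have "f i \<le> (1/2)^i * (4 * real i + (if i = 0 then 1 else 0))"
      unfolding f_def by (rule mult_left_mono[OF cardb]) simp
    then show "f i \<le> 4 * (real i * (1/2)^i) + (if i = 0 then 1 else 0)"
      by (cases "i = 0") (simp_all add: algebra_simps)
  qed
  also have "\<dots> = 4 * (\<Sum>i<K. real i * (1/2)^i) + 1"
    using K by (simp add: sum.distrib sum_distrib_left)
  also have "\<dots> = 4 * (2 - 2 * (real K + 1) * (1/2)^K) + 1" by (simp add: geo_sum)
  also have "\<dots> < 9" by simp
  finally show ?thesis .
qed

end
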